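(* The category $\mathbf{CA}$ of conditional algebras with conditional homomorphisms and the category $\mathbf{CS}$ of conditional spaces with conditional functions are dually equivalent.
   Context: A conditional algebra is $\langle A,\to\rangle$ with $A$ a Boolean algebra and $\to$ binary with $a\to1=1$, $(a\to b)\wedge(a\to c)=a\to(b\wedge c)$, $(a\vee b)\to c\le(a\to c)\wedge(b\to c)$. A conditional homomorphism is a Boolean homomorphism $h$ with $h(a\to b)=h(a)\to h(b)$. A conditional space is $\langle X,\tau,T\rangle$ with $\langle X,\tau\rangle$ a Boolean space and $T\subseteq X\times\mathcal{C}(\tau)\times X$ ($\mathcal{C}(\tau)$ the closed sets) satisfying: (T1) $T(x,Y)=\{y:T(x,Y,y)\}$ is closed for every $x$ and closed $Y$; (T2) for clopen $U,V$, $U\to_T V=\{x:\text{for all closed }Z\subseteq U,\ T(x,Z)\subseteq V\}$ is clopen; (T3) for closed $Y$, $T(x,Y,y)$ iff $T(x,U,y)$ for all clopen $U\supseteq Y$. A conditional function between conditional spaces $\langle X_1,\tau_1,T_1\rangle$, $\langle X_2,\tau_2,T_2\rangle$ is a continuous $f\colon X_1\to X_2$ such that for all $x\in X_1$ and clopen $U,V\subseteq X_2$: $T_1(x,f^{-1}[U])\subseteq f^{-1}[V]$ iff $T_2(f(x),U)\subseteq V$. In both categories composition is composition of maps and identities are identity maps. *)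

theory Defs
  imports "HOL-Analysis.Analysis"
begin

record 'a calg =
  carrier :: "'a set"
  meet :: "'a \<Rightarrow> 'a \<Rightarrow> 'a"
  join :: "'a \<Rightarrow> 'a \<Rightarrow> 'a"
  cmpl :: "'a \<Rightarrow> 'a"
  bot :: "'a"
  top :: "'a"
  imp :: "'a \<Rightarrow> 'a \<Rightarrow> 'a"

definition leq :: "'a calg \<Rightarrow> 'a \<Rightarrow> 'a \<Rightarrow> bool" where
  "leq A a b \<longleftrightarrow> meet A a b = a"

definition boolean_alg :: "'a calg \<Rightarrow> bool" where
  "boolean_alg A \<longleftrightarrow>
     bot A \<in> carrier A \<and> top A \<in> carrier A \<and>
     (\<forall>a\<in>carrier A. \<forall>b\<in>carrier A. meet A a b \<in> carrier A \<and> join A a b \<in> carrier A) \<and>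
     (\<forall>a\<in>carrier A. cmpl A a \<in> carrier A) \<and>
     (\<forall>a\<in>carrier A. \<forall>b\<in>carrier A. meet A a b = meet A b a \<and> join A a b = join A b a) \<and>
     (\<forall>a\<in>carrier A. \<forall>b\<in>carrier A. \<forall>c\<in>carrier A.
        meet A (meet A a b) c = meet A a (meet A b c) \<and>
        join A (join A a b) c = join A a (join A b c) \<and>
        meet A a (join A b c) = join A (meet A a b) (meet A a c) \<and>
        join A a (meet A b c) = meet A (join A a b) (join A a c)) \<and>
     (\<forall>a\<in>carrier A. \<forall>b\<in>carrier A. meet A a (join A a b) = a \<and> join A a (meet A a b) = a) \<and>
     (\<forall>a\<in>carrier A. meet A a (top A) = a \<and> join A a (bot A) = a) \<and>
     (\<forall>a\<in>carrier A. meet A a (cmpl A a) = bot A \<and> join A a (cmpl A a) = top A)"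

definition cond_alg :: "'a calg \<Rightarrow> bool" where
  "cond_alg A \<longleftrightarrow> boolean_alg A \<and>
     (\<forall>a\<in>carrier A. \<forall>b\<in>carrier A. imp A a b \<in> carrier A) \<and>
     (\<forall>a\<in>carrier A. imp A a (top A) = top A) \<and>
     (\<forall>a\<in>carrier A. \<forall>b\<in>carrier A. \<forall>c\<in>carrier A.
        meet A (imp A a b) (imp A a c) = imp A a (meet A b c)) \<and>
     (\<forall>a\<in>carrier A. \<forall>b\<in>carrier A. \<forall>c\<in>carrier A.
        leq A (imp A (join A a b) c) (meet A (imp A a c) (imp A b c)))"

text \<open>Conditional homomorphism (maps are only relevant on the carrier).\<close>
definition cond_hom :: "'a calg \<Rightarrow> 'b calg \<Rightarrow> ('a \<Rightarrow> 'b) \<Rightarrow> bool" where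
  "cond_hom A B h \<longleftrightarrow>
     (\<forall>a\<in>carrier A. h a \<in> carrier B) \<and>
     (\<forall>a\<in>carrier A. \<forall>b\<in>carrier A.
        h (meet A a b) = meet B (h a) (h b) \<and> h (join A a b) = join B (h a) (h b) \<and>
        h (imp A a b) = imp B (h a) (h b)) \<and>
     (\<forall>a\<in>carrier A. h (cmpl A a) = cmpl B (h a)) \<and>
     h (bot A) = bot B \<and> h (top A) = top B"

definition cond_iso :: "'a calg \<Rightarrow> 'b calg \<Rightarrow> bool" where
  "cond_iso A B \<longleftrightarrow> (\<exists>h k. cond_hom A B h \<and> cond_hom B A k \<and>
     (\<forall>a\<in>carrier A. k (h a) = a) \<and> (\<forall>b\<in>carrier B. h (k b) = b))"

definition clopen_in :: "'x topology \<Rightarrow> 'x set \<Rightarrow> bool" where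
  "clopen_in X U \<longleftrightarrow> openin X U \<and> closedin X U"

definition boolean_space :: "'x topology \<Rightarrow> bool" where
  "boolean_space X \<longleftrightarrow> compact_space X \<and> Hausdorff_space X \<and>
     (\<forall>U x. openin X U \<and> x \<in> U \<longrightarrow> (\<exists>V. clopen_in X V \<and> x \<in> V \<and> V \<subseteq> U))"

text \<open>The ternary relation T is represented as a predicate; T(x,Y) is its section.\<close>
definition Tsec :: "('x \<Rightarrow> 'x set \<Rightarrow> 'x \<Rightarrow> bool) \<Rightarrow> 'x \<Rightarrow> 'x set \<Rightarrow> 'x set" where
  "Tsec T x Y = {y. T x Y y}"

definition Timp :: "'x topology \<Rightarrow> ('x \<Rightarrow> 'x set \<Rightarrow> 'x \<Rightarrow> bool) \<Rightarrow> 'x set \<Rightarrow> 'x set \<Rightarrow> 'x set" where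
  "Timp X T U V = {x \<in> topspace X. \<forall>Z. closedin X Z \<and> Z \<subseteq> U \<longrightarrow> Tsec T x Z \<subseteq> V}"

definition cond_space :: "'x topology \<Rightarrow> ('x \<Rightarrow> 'x set \<Rightarrow> 'x \<Rightarrow> bool) \<Rightarrow> bool" where
  "cond_space X T \<longleftrightarrow> boolean_space X \<and>
     \<comment> \<open>T is a subset of X \<times> C(\<tau>) \<times> X\<close>
     (\<forall>x Y y. T x Y y \<longrightarrow> x \<in> topspace X \<and> closedin X Y \<and> y \<in> topspace X) \<and>
     \<comment> \<open>(T1)\<close>
     (\<forall>x Y. x \<in> topspace X \<and> closedin X Y \<longrightarrow> closedin X (Tsec T x Y)) \<and>
     \<comment> \<open>(T2)\<close>
     (\<forall>U V. clopen_in X U \<and> clopen_in X V \<longrightarrow> clopen_in X (Timp X T U V)) \<and>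
     \<comment> \<open>(T3)\<close>
     (\<forall>x Y y. closedin X Y \<longrightarrow>
        (T x Y y \<longleftrightarrow> (\<forall>U. clopen_in X U \<and> Y \<subseteq> U \<longrightarrow> T x U y)))"

definition cond_fun :: "'x topology \<Rightarrow> ('x \<Rightarrow> 'x set \<Rightarrow> 'x \<Rightarrow> bool) \<Rightarrow>
                        'y topology \<Rightarrow> ('y \<Rightarrow> 'y set \<Rightarrow> 'y \<Rightarrow> bool) \<Rightarrow> ('x \<Rightarrow> 'y) \<Rightarrow> bool" where
  "cond_fun X1 T1 X2 T2 f \<longleftrightarrow> continuous_map X1 X2 f \<and>
     (\<forall>x\<in>topspace X1. \<forall>U V. clopen_in X2 U \<and> clopen_in X2 V \<longrightarrow>
        (Tsec T1 x (f -` U \<inter> topspace X1) \<subseteq> f -` V \<inter> topspace X1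
           \<longleftrightarrow> Tsec T2 (f x) U \<subseteq> V))"

definition clop_alg :: "'x topology \<Rightarrow> ('x \<Rightarrow> 'x set \<Rightarrow> 'x \<Rightarrow> bool) \<Rightarrow> 'x set calg" where
  "clop_alg X T = \<lparr> carrier = {U. clopen_in X U}, meet = (\<inter>), join = (\<union>),
     cmpl = (\<lambda>U. topspace X - U), bot = {}, top = topspace X, imp = Timp X T \<rparr>"

definition preim :: "'x topology \<Rightarrow> ('x \<Rightarrow> 'y) \<Rightarrow> 'y set \<Rightarrow> 'x set" where
  "preim X f U = f -` U \<inter> topspace X"

end

theory Submission
  imports Defs
begin

locale BA = fixes A :: "'a calg" assumes ba: "boolean_alg A"
begin

abbreviation "C \<equiv> carrier A"
lemma ax0: "bot A \<in> C"
  using ba unfolding boolean_alg_def by (elim conjE) assumption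
lemma ax1: "top A \<in> C"
  using ba unfolding boolean_alg_def by (elim conjE) assumption
lemma ax2: "(\<forall>a\<in>carrier A. \<forall>b\<in>carrier A. meet A a b \<in> carrier A \<and> join A a b \<in> carrier A)"
  using ba unfolding boolean_alg_def by (elim conjE) assumption
lemma ax3: "(\<forall>a\<in>carrier A. cmpl A a \<in> carrier A)"
  using ba unfolding boolean_alg_def by (elim conjE) assumption
lemma ax4: "(\<forall>a\<in>carrier A. \<forall>b\<in>carrier A. meet A a b = meet A b a \<and> join A a b = join A b a)"
  using ba unfolding boolean_alg_def by (elim conjE) assumption
lemma ax5: "(\<forall>a\<in>carrier A. \<forall>b\<in>carrier A. \<forall>c\<in>carrier A.
        meet A (meet A a b) c = meet A a (meet A b c) \<and>
        join A (join A a b) c = join A a (join A b c) \<and>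
        meet A a (join A b c) = join A (meet A a b) (meet A a c) \<and>
        join A a (meet A b c) = meet A (join A a b) (join A a c))"
  using ba unfolding boolean_alg_def by (elim conjE) assumption
lemma ax6: "(\<forall>a\<in>carrier A. \<forall>b\<in>carrier A. meet A a (join A a b) = a \<and> join A a (meet A a b) = a)"
  using ba unfolding boolean_alg_def by (elim conjE) assumption
lemma ax7: "(\<forall>a\<in>carrier A. meet A a (top A) = a \<and> join A a (bot A) = a)"
  using ba unfolding boolean_alg_def by (elim conjE) assumption
lemma ax8: "(\<forall>a\<in>carrier A. meet A a (cmpl A a) = bot A \<and> join A a (cmpl A a) = top A)"
  using ba unfolding boolean_alg_def by (elim conjE) assumption

lemma top_in[simp]: "top A \<in> C" and bot_in[simp]: "bot A \<in> C"
  using ax0 ax1 by blast+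
lemma meet_in[simp]: "a \<in> C \<Longrightarrow> b \<in> C \<Longrightarrow> meet A a b \<in> C"
  and join_in[simp]: "a \<in> C \<Longrightarrow> b \<in> C \<Longrightarrow> join A a b \<in> C"
  and cmpl_in[simp]: "a \<in> C \<Longrightarrow> cmpl A a \<in> C"
  using ax2 ax3 by blast+
lemma meet_comm: "a \<in> C \<Longrightarrow> b \<in> C \<Longrightarrow> meet A a b = meet A b a"
  and join_comm: "a \<in> C \<Longrightarrow> b \<in> C \<Longrightarrow> join A a b = join A b a"
  using ax4 by blast+
lemma meet_assoc: "a \<in> C \<Longrightarrow> b \<in> C \<Longrightarrow> c \<in> C \<Longrightarrow> meet A (meet A a b) c = meet A a (meet A b c)"
  and join_assoc: "a \<in> C \<Longrightarrow> b \<in> C \<Longrightarrow> c \<in> C \<Longrightarrow> join A (join A a b) c = join A a (join A b c)"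
  and distr1: "a \<in> C \<Longrightarrow> b \<in> C \<Longrightarrow> c \<in> C \<Longrightarrow> meet A a (join A b c) = join A (meet A a b) (meet A a c)"
  and distr2: "a \<in> C \<Longrightarrow> b \<in> C \<Longrightarrow> c \<in> C \<Longrightarrow> join A a (meet A b c) = meet A (join A a b) (join A a c)"
  using ax5 by blast+
lemma absorb1: "a \<in> C \<Longrightarrow> b \<in> C \<Longrightarrow> meet A a (join A a b) = a"
  and absorb2: "a \<in> C \<Longrightarrow> b \<in> C \<Longrightarrow> join A a (meet A a b) = a"
  using ax6 by blast+
lemma meet_top[simp]: "a \<in> C \<Longrightarrow> meet A a (top A) = a"
  and join_bot[simp]: "a \<in> C \<Longrightarrow> join A a (bot A) = a"
  and meet_cmpl[simp]: "a \<in> C \<Longrightarrow> meet A a (cmpl A a) = bot A"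
  and join_cmpl[simp]: "a \<in> C \<Longrightarrow> join A a (cmpl A a) = top A"
  using ax7 ax8 by blast+

lemma top_meet[simp]: "a \<in> C \<Longrightarrow> meet A (top A) a = a"
  by (metis meet_comm meet_top top_in)
lemma bot_join[simp]: "a \<in> C \<Longrightarrow> join A (bot A) a = a"
  by (metis join_comm join_bot bot_in)

lemma meet_idem[simp]: "a \<in> C \<Longrightarrow> meet A a a = a"
proof -
  assume a: "a \<in> C"
  have "join A a (meet A a a) = a" using absorb2[OF a a] .
  then show ?thesis using absorb1[OF a meet_in[OF a a]] by simp
qed
lemma join_idem[simp]: "a \<in> C \<Longrightarrow> join A a a = a"
proof -
  assume a: "a \<in> C"
  have "meet A a (join A a a) = a" using absorb1[OF a a] .
  then show ?thesis using absorb2[OF a join_in[OF a a]] by simp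
qed
lemma meet_bot[simp]: "a \<in> C \<Longrightarrow> meet A a (bot A) = bot A"
  by (metis meet_cmpl meet_assoc meet_idem cmpl_in)
lemma bot_meet[simp]: "a \<in> C \<Longrightarrow> meet A (bot A) a = bot A"
  by (metis meet_comm meet_bot bot_in)
lemma join_top[simp]: "a \<in> C \<Longrightarrow> join A a (top A) = top A"
  by (metis join_cmpl join_assoc join_idem cmpl_in)

lemma leq_refl[simp]: "a \<in> C \<Longrightarrow> leq A a a"
  by (simp add: leq_def)
lemma leq_trans: "a \<in> C \<Longrightarrow> b \<in> C \<Longrightarrow> c \<in> C \<Longrightarrow> leq A a b \<Longrightarrow> leq A b c \<Longrightarrow> leq A a c"
  unfolding leq_def
proof -
  assume a: "a \<in> C" "b \<in> C" "c \<in> C" "meet A a b = a" "meet A b c = b"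
  have "meet A a c = meet A (meet A a b) c" using a by simp
  also have "\<dots> = meet A a (meet A b c)" using a meet_assoc by blast
  finally show "meet A a c = a" using a by simp
qed
lemma leq_antisym: "a \<in> C \<Longrightarrow> b \<in> C \<Longrightarrow> leq A a b \<Longrightarrow> leq A b a \<Longrightarrow> a = b"
  unfolding leq_def by (metis meet_comm)
lemma meet_leq1: "a \<in> C \<Longrightarrow> b \<in> C \<Longrightarrow> leq A (meet A a b) a"
  unfolding leq_def by (metis meet_assoc meet_comm meet_idem)
lemma meet_leq2: "a \<in> C \<Longrightarrow> b \<in> C \<Longrightarrow> leq A (meet A a b) b"
  unfolding leq_def by (metis meet_assoc meet_idem)
lemma leq_meetI: "a \<in> C \<Longrightarrow> b \<in> C \<Longrightarrow> c \<in> C \<Longrightarrow> leq A c a \<Longrightarrow> leq A c b \<Longrightarrow> leq A c (meet A a b)"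
  unfolding leq_def
proof -
  assume a: "a \<in> C" "b \<in> C" "c \<in> C" "meet A c a = c" "meet A c b = c"
  have "meet A (meet A c a) b = meet A c (meet A a b)" using a meet_assoc by blast
  then show "meet A c (meet A a b) = c" using a by simp
qed
lemma leq_top[simp]: "a \<in> C \<Longrightarrow> leq A a (top A)"
  by (simp add: leq_def)
lemma leq_bot: "a \<in> C \<Longrightarrow> leq A a (bot A) \<Longrightarrow> a = bot A"
  by (simp add: leq_def)
lemma leq_join: "a \<in> C \<Longrightarrow> b \<in> C \<Longrightarrow> leq A a b \<longleftrightarrow> join A a b = b"
  unfolding leq_def by (metis absorb1 absorb2 join_comm meet_comm)
lemma leq_join1: "a \<in> C \<Longrightarrow> b \<in> C \<Longrightarrow> leq A a (join A a b)"
  unfolding leq_def by (simp add: absorb1)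
lemma meet_mono: "a \<in> C \<Longrightarrow> b \<in> C \<Longrightarrow> c \<in> C \<Longrightarrow> leq A a b \<Longrightarrow> leq A (meet A a c) (meet A b c)"
  by (meson leq_meetI leq_trans meet_in meet_leq1 meet_leq2)

lemma cmpl_unique:
  assumes "a \<in> C" "x \<in> C" "meet A a x = bot A" "join A a x = top A"
  shows "x = cmpl A a"
proof -
  have "x = meet A x (join A a (cmpl A a))" using assms by simp
  also have "\<dots> = join A (meet A x a) (meet A x (cmpl A a))" using assms distr1[of x a "cmpl A a"] by simp
  also have "\<dots> = meet A x (cmpl A a)" using assms by (simp add: meet_comm[of x a])
  finally have 1: "x = meet A x (cmpl A a)" .
  have "cmpl A a = meet A (cmpl A a) (join A a x)" using assms by simp
  also have "\<dots> = join A (meet A (cmpl A a) a) (meet A (cmpl A a) x)" using assms distr1[of "cmpl A a" a x] by simp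
  also have "\<dots> = meet A (cmpl A a) x" using assms by (simp add: meet_comm[of "cmpl A a" a])
  finally have 2: "cmpl A a = meet A (cmpl A a) x" .
  show ?thesis using 1 2 assms by (metis meet_comm cmpl_in)
qed

lemma cmpl_cmpl[simp]: "a \<in> C \<Longrightarrow> cmpl A (cmpl A a) = a"
  by (metis cmpl_unique cmpl_in meet_cmpl join_cmpl meet_comm join_comm)

lemma leq_iff_meet_cmpl: "a \<in> C \<Longrightarrow> b \<in> C \<Longrightarrow> leq A a b \<longleftrightarrow> meet A a (cmpl A b) = bot A"
proof
  assume a: "a \<in> C" "b \<in> C" "leq A a b"
  then have "meet A a (cmpl A b) = meet A (meet A a b) (cmpl A b)" by (simp add: leq_def)
  also have "\<dots> = meet A a (meet A b (cmpl A b))" using a by (simp add: meet_assoc)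
  also have "\<dots> = bot A" using a by simp
  finally show "meet A a (cmpl A b) = bot A" .
next
  assume a: "a \<in> C" "b \<in> C" "meet A a (cmpl A b) = bot A"
  have "a = meet A a (join A b (cmpl A b))" using a by simp
  also have "\<dots> = join A (meet A a b) (meet A a (cmpl A b))" using a distr1[of a b "cmpl A b"] by simp
  also have "\<dots> = meet A a b" using a by simp
  finally show "leq A a b" unfolding leq_def by simp
qed

lemma join_cmpl_meet: "a \<in> C \<Longrightarrow> b \<in> C \<Longrightarrow> meet A (join A a b) (meet A (cmpl A a) (cmpl A b)) = bot A"
proof -
  assume a: "a \<in> C" "b \<in> C"
  let ?m = "meet A (cmpl A a) (cmpl A b)"
  have e1: "meet A ?m a = bot A"
  proof -
    have "meet A ?m a = meet A a ?m" using a meet_comm[of ?m a] by simp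
    also have "\<dots> = meet A (meet A a (cmpl A a)) (cmpl A b)" by (rule meet_assoc[symmetric]) (simp_all add: a)
    finally show ?thesis using a by simp
  qed
  have e2: "meet A ?m b = bot A"
  proof -
    have "meet A ?m b = meet A (cmpl A a) (meet A (cmpl A b) b)" by (rule meet_assoc) (simp_all add: a)
    also have "meet A (cmpl A b) b = bot A" using a meet_comm[of "cmpl A b" b] by simp
    finally show ?thesis using a by simp
  qed
  have "meet A (join A a b) ?m = meet A ?m (join A a b)" using a meet_comm[of ?m "join A a b"] by simp
  also have "\<dots> = join A (meet A ?m a) (meet A ?m b)" using a distr1[of ?m a b] by simp
  finally show ?thesis using a e1 e2 by simp
qed

lemma leq_cmpl_bot: "a \<in> C \<Longrightarrow> leq A (top A) a \<Longrightarrow> a = top A"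
  by (simp add: leq_def)

end

context BA begin

definition filt :: "'a set \<Rightarrow> bool" where
  "filt F \<longleftrightarrow> F \<subseteq> C \<and> top A \<in> F \<and> (\<forall>a\<in>F. \<forall>b\<in>F. meet A a b \<in> F) \<and>
     (\<forall>a\<in>F. \<forall>b\<in>C. leq A a b \<longrightarrow> b \<in> F)"

definition ufilt :: "'a set \<Rightarrow> bool" where
  "ufilt u \<longleftrightarrow> filt u \<and> bot A \<notin> u \<and> (\<forall>a\<in>C. a \<in> u \<or> cmpl A a \<in> u)"

inductive_set gen :: "'a set \<Rightarrow> 'a set" for S where
  g_top: "top A \<in> gen S"
| g_S: "s \<in> S \<Longrightarrow> s \<in> gen S"
| g_meet: "a \<in> gen S \<Longrightarrow> b \<in> gen S \<Longrightarrow> meet A a b \<in> gen S"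
| g_up: "a \<in> gen S \<Longrightarrow> b \<in> C \<Longrightarrow> leq A a b \<Longrightarrow> b \<in> gen S"

lemma gen_sub: "S \<subseteq> C \<Longrightarrow> gen S \<subseteq> C"
proof
  fix x assume S: "S \<subseteq> C" and x: "x \<in> gen S"
  from x show "x \<in> C"
    by (induction rule: gen.induct) (use S in auto)
qed

lemma gen_filt: "S \<subseteq> C \<Longrightarrow> filt (gen S)"
  unfolding filt_def using gen_sub by (auto intro: gen.intros)

lemma filt_sub: "filt F \<Longrightarrow> a \<in> F \<Longrightarrow> a \<in> C"
  unfolding filt_def by auto

lemma ufilt_filt: "ufilt u \<Longrightarrow> filt u" unfolding ufilt_def by auto

lemma ufilt_sub: "ufilt u \<Longrightarrow> a \<in> u \<Longrightarrow> a \<in> C"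
  unfolding ufilt_def filt_def by auto

lemma ufilt_top: "ufilt u \<Longrightarrow> top A \<in> u"
  unfolding ufilt_def filt_def by auto

lemma ufilt_bot: "ufilt u \<Longrightarrow> bot A \<notin> u"
  unfolding ufilt_def by auto

lemma filt_up: "filt F \<Longrightarrow> a \<in> F \<Longrightarrow> b \<in> C \<Longrightarrow> leq A a b \<Longrightarrow> b \<in> F"
  unfolding filt_def by auto

lemma filt_meet: "filt F \<Longrightarrow> a \<in> F \<Longrightarrow> b \<in> F \<Longrightarrow> meet A a b \<in> F"
  unfolding filt_def by auto

lemma ufilt_meet: "ufilt u \<Longrightarrow> a \<in> C \<Longrightarrow> b \<in> C \<Longrightarrow> meet A a b \<in> u \<longleftrightarrow> a \<in> u \<and> b \<in> u"
proof -
  assume u: "ufilt u" and a: "a \<in> C" and b: "b \<in> C"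
  have F: "filt u" using u ufilt_filt by simp
  show ?thesis
  proof
    assume m: "meet A a b \<in> u"
    show "a \<in> u \<and> b \<in> u"
      using filt_up[OF F m a meet_leq1[OF a b]] filt_up[OF F m b meet_leq2[OF a b]] by simp
  qed (use F filt_meet in auto)
qed

lemma ufilt_cmpl: "ufilt u \<Longrightarrow> a \<in> C \<Longrightarrow> cmpl A a \<in> u \<longleftrightarrow> a \<notin> u"
proof -
  assume u: "ufilt u" and a: "a \<in> C"
  show ?thesis
  proof
    assume "cmpl A a \<in> u"
    then show "a \<notin> u" using u a ufilt_meet[of u a "cmpl A a"] ufilt_bot by auto
  next
    assume "a \<notin> u" then show "cmpl A a \<in> u" using u a unfolding ufilt_def by auto
  qed
qed

lemma ufilt_join: "ufilt u \<Longrightarrow> a \<in> C \<Longrightarrow> b \<in> C \<Longrightarrow> join A a b \<in> u \<longleftrightarrow> a \<in> u \<or> b \<in> u"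
proof -
  assume u: "ufilt u" and a: "a \<in> C" and b: "b \<in> C"
  show ?thesis
  proof
    assume j: "join A a b \<in> u"
    show "a \<in> u \<or> b \<in> u"
    proof (rule ccontr)
      assume "\<not> (a \<in> u \<or> b \<in> u)"
      then have "cmpl A a \<in> u" "cmpl A b \<in> u" using u a b ufilt_cmpl by auto
      then have "meet A (join A a b) (meet A (cmpl A a) (cmpl A b)) \<in> u"
        using j u a b ufilt_meet by simp
      then show False using join_cmpl_meet[OF a b] u ufilt_bot by simp
    qed
  next
    assume "a \<in> u \<or> b \<in> u"
    then show "join A a b \<in> u"
    proof
      assume "a \<in> u" then show ?thesis using filt_up[OF ufilt_filt[OF u] _ _ leq_join1[OF a b]] a b by simp
    next
      assume "b \<in> u" then show ?thesis using filt_up[OF ufilt_filt[OF u] _ _ leq_join1[OF b a]] a b join_comm[OF a b] by simp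
    qed
  qed
qed

lemma gen_insert_inv:
  assumes F: "filt F" and a: "a \<in> C" and c: "c \<in> gen (insert a F)"
  shows "\<exists>m\<in>F. leq A (meet A m a) c"
proof -
  have FC: "F \<subseteq> C" using F unfolding filt_def by blast
  then have GC: "gen (insert a F) \<subseteq> C" using gen_sub a by simp
  from c show ?thesis
proof (induction rule: gen.induct)
  case g_top
  have "top A \<in> F" using F unfolding filt_def by auto
  then show ?case using a by (intro bexI[of _ "top A"]) auto
next
  case (g_S s)
  then show ?case
  proof
    assume "s = a" then show ?thesis using F a unfolding filt_def by (auto intro: bexI[of _ "top A"])
  next
    assume s: "s \<in> F"
    then have "s \<in> C" using F filt_sub by auto
    then show ?thesis using s a meet_leq1 by blast
  qed
next
  case (g_meet x y)
  then obtain m1 m2 where m: "m1 \<in> F" "m2 \<in> F" "leq A (meet A m1 a) x" "leq A (meet A m2 a) y" by auto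
  have C: "m1 \<in> C" "m2 \<in> C" using m F filt_sub by auto
  have xy: "x \<in> C" "y \<in> C" using g_meet.hyps GC by auto
  have "meet A m1 m2 \<in> F" using F m filt_meet by auto
  moreover have "leq A (meet A (meet A m1 m2) a) (meet A x y)"
  proof (rule leq_meetI)
    show "leq A (meet A (meet A m1 m2) a) x"
      using leq_trans[OF _ _ _ meet_mono[of "meet A m1 m2" m1 a] m(3)] C a xy meet_leq1 by simp
    show "leq A (meet A (meet A m1 m2) a) y"
      using leq_trans[OF _ _ _ meet_mono[of "meet A m1 m2" m2 a] m(4)] C a xy meet_leq2 by simp
  qed (use C a xy in auto)
  ultimately show ?case by blast
next
  case (g_up x y)
  then obtain m where m: "m \<in> F" "leq A (meet A m a) x" by auto
  have "m \<in> C" using m F filt_sub by auto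
  have "x \<in> C" using g_up.hyps GC by auto
  then have "leq A (meet A m a) y" using leq_trans[OF _ _ _ m(2) g_up(3)] \<open>m \<in> C\<close> a g_up(2) by simp
  then show ?case using m by blast
qed
qed

lemma ufilt_ext:
  assumes F: "filt F" and nb: "bot A \<notin> F"
  shows "\<exists>u. ufilt u \<and> F \<subseteq> u"
proof -
  let ?P = "{G. filt G \<and> F \<subseteq> G \<and> bot A \<notin> G}"
  have "\<exists>M\<in>?P. \<forall>X\<in>?P. M \<subseteq> X \<longrightarrow> X = M"
  proof (rule Zorn_Lemma2, intro ballI)
    fix Ch assume ch: "Ch \<in> chains ?P"
    show "\<exists>U\<in>?P. \<forall>X\<in>Ch. X \<subseteq> U"
    proof (cases "Ch = {}")
      case True then show ?thesis using F nb by auto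
    next
      case False
      have sub: "Ch \<subseteq> ?P" using ch unfolding chains_def by auto
      have lin: "\<forall>X\<in>Ch. \<forall>Y\<in>Ch. X \<subseteq> Y \<or> Y \<subseteq> X" using ch unfolding chains_def chain_subset_def by auto
      have "filt (\<Union>Ch)"
        unfolding filt_def
      proof (intro conjI ballI impI)
        show "\<Union>Ch \<subseteq> C" using sub filt_def by auto
        show "top A \<in> \<Union>Ch" using sub False filt_def by auto
      next
        fix x y assume "x \<in> \<Union>Ch" "y \<in> \<Union>Ch"
        then obtain X Y where "X \<in> Ch" "Y \<in> Ch" "x \<in> X" "y \<in> Y" by auto
        then show "meet A x y \<in> \<Union>Ch" using lin sub filt_meet
          by (metis (no_types, lifting) UnionI mem_Collect_eq subsetD)
      next
        fix x y assume "x \<in> \<Union>Ch" "y \<in> C" "leq A x y"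
        then show "y \<in> \<Union>Ch" using sub filt_up by blast
      qed
      moreover have "F \<subseteq> \<Union>Ch" using sub False by auto
      moreover have "bot A \<notin> \<Union>Ch" using sub by auto
      ultimately show ?thesis by auto
    qed
  qed
  then obtain M where M: "filt M" "F \<subseteq> M" "bot A \<notin> M" and max: "\<forall>X\<in>?P. M \<subseteq> X \<longrightarrow> X = M" by auto
  have "ufilt M"
    unfolding ufilt_def
  proof (intro conjI ballI M)
    fix a assume a: "a \<in> C"
    show "a \<in> M \<or> cmpl A a \<in> M"
    proof (rule ccontr)
      assume na: "\<not> (a \<in> M \<or> cmpl A a \<in> M)"
      have MC: "M \<subseteq> C" using M filt_def by auto
      let ?G = "gen (insert a M)"
      have "bot A \<notin> ?G"
      proof
        assume "bot A \<in> ?G"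
        then obtain m where m: "m \<in> M" "leq A (meet A m a) (bot A)" using gen_insert_inv[OF M(1) a] by auto
        have mC: "m \<in> C" using m MC by auto
        have "meet A m a = bot A" using leq_bot m mC a by simp
        then have "leq A m (cmpl A a)" using leq_iff_meet_cmpl[of m "cmpl A a"] mC a by simp
        then have "cmpl A a \<in> M" using M(1) m filt_up a by simp
        then show False using na by simp
      qed
      moreover have "filt ?G" using gen_filt MC a by simp
      moreover have "M \<subseteq> ?G" by (auto intro: gen.g_S)
      ultimately have "?G = M" using max M by auto
      moreover have "a \<in> ?G" by (auto intro: gen.g_S)
      ultimately show False using na by simp
    qed
  qed
  then show ?thesis using M by auto
qed

lemma ext_insert:
  assumes F: "filt F" and a: "a \<in> C" and nb: "\<forall>m\<in>F. meet A m a \<noteq> bot A"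
  shows "\<exists>u. ufilt u \<and> F \<subseteq> u \<and> a \<in> u"
proof -
  have FC: "F \<subseteq> C" using F filt_def by auto
  have "bot A \<notin> gen (insert a F)"
  proof
    assume "bot A \<in> gen (insert a F)"
    then obtain m where m: "m \<in> F" "leq A (meet A m a) (bot A)" using gen_insert_inv[OF F a] by auto
    have "m \<in> C" using m FC by auto
    then show False using nb m leq_bot[of "meet A m a"] a by auto
  qed
  moreover have "filt (gen (insert a F))" using gen_filt FC a by simp
  ultimately obtain u where "ufilt u" "gen (insert a F) \<subseteq> u" using ufilt_ext by blast
  then show ?thesis by (auto intro: gen.g_S)
qed

lemma principal_filt: "b \<in> C \<Longrightarrow> filt {c \<in> C. leq A b c}"
  unfolding filt_def
proof (intro conjI ballI impI)
  assume b: "b \<in> C"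
  show "{c \<in> C. leq A b c} \<subseteq> C" by auto
  show "top A \<in> {c \<in> C. leq A b c}" using b by simp
  fix x y assume "x \<in> {c \<in> C. leq A b c}" "y \<in> {c \<in> C. leq A b c}"
  then show "meet A x y \<in> {c \<in> C. leq A b c}" using leq_meetI b by simp
next
  fix x y assume b: "b \<in> C" and "x \<in> {c \<in> C. leq A b c}" "y \<in> C" "leq A x y"
  then show "y \<in> {c \<in> C. leq A b c}" using leq_trans[of b x y] by simp
qed

lemma separate:
  assumes a: "a \<in> C" and b: "b \<in> C" and nl: "\<not> leq A a b"
  shows "\<exists>u. ufilt u \<and> a \<in> u \<and> b \<notin> u"
proof -
  have "\<forall>m\<in>{c \<in> C. leq A a c}. meet A m (cmpl A b) \<noteq> bot A"
  proof
    fix m assume m: "m \<in> {c \<in> C. leq A a c}"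
    show "meet A m (cmpl A b) \<noteq> bot A"
    proof
      assume "meet A m (cmpl A b) = bot A"
      then have "leq A m b" using leq_iff_meet_cmpl[of m b] m b by simp
      moreover have "m \<in> C" "leq A a m" using m by auto
      ultimately show False using leq_trans[of a m b] a b nl by simp
    qed
  qed
  then obtain u where u: "ufilt u" "{c \<in> C. leq A a c} \<subseteq> u" "cmpl A b \<in> u"
    using ext_insert[OF principal_filt[OF a] cmpl_in[OF b]] by blast
  then show ?thesis using a b ufilt_cmpl by auto
qed

end

context BA begin

definition Uf :: "'a set set" where "Uf = {u. ufilt u}"
definition phi :: "'a \<Rightarrow> 'a set set" where "phi a = {u. ufilt u \<and> a \<in> u}"
definition sopen :: "'a set set \<Rightarrow> bool" where
  "sopen U \<longleftrightarrow> U \<subseteq> Uf \<and> (\<forall>u\<in>U. \<exists>a\<in>C. u \<in> phi a \<and> phi a \<subseteq> U)"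
definition stone :: "'a set topology" where "stone = topology sopen"

lemma phi_sub: "phi a \<subseteq> Uf" unfolding phi_def Uf_def by auto
lemma phi_meet: "a \<in> C \<Longrightarrow> b \<in> C \<Longrightarrow> phi (meet A a b) = phi a \<inter> phi b"
  unfolding phi_def using ufilt_meet by auto
lemma phi_join: "a \<in> C \<Longrightarrow> b \<in> C \<Longrightarrow> phi (join A a b) = phi a \<union> phi b"
  unfolding phi_def using ufilt_join by auto
lemma phi_cmpl: "a \<in> C \<Longrightarrow> phi (cmpl A a) = Uf - phi a"
  unfolding phi_def Uf_def using ufilt_cmpl by auto
lemma phi_bot: "phi (bot A) = {}"
  unfolding phi_def using ufilt_bot by auto
lemma phi_top: "phi (top A) = Uf"
  unfolding phi_def Uf_def using ufilt_top by auto

lemma phi_leq: "a \<in> C \<Longrightarrow> b \<in> C \<Longrightarrow> phi a \<subseteq> phi b \<longleftrightarrow> leq A a b"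
proof
  assume a: "a \<in> C" "b \<in> C" "phi a \<subseteq> phi b"
  show "leq A a b"
  proof (rule ccontr)
    assume "\<not> leq A a b"
    then obtain u where "ufilt u" "a \<in> u" "b \<notin> u" using separate a by blast
    then show False using a unfolding phi_def by auto
  qed
next
  assume a: "a \<in> C" "b \<in> C" "leq A a b"
  show "phi a \<subseteq> phi b" unfolding phi_def using a filt_up ufilt_filt by blast
qed

lemma phi_inj: "a \<in> C \<Longrightarrow> b \<in> C \<Longrightarrow> phi a = phi b \<Longrightarrow> a = b"
  using phi_leq leq_antisym by (metis order_refl)

lemma istop: "istopology sopen"
  unfolding istopology_def
proof (intro conjI allI impI)
  fix S T assume S: "sopen S" and T: "sopen T"
  show "sopen (S \<inter> T)"
    unfolding sopen_def
  proof (intro conjI ballI)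
    show "S \<inter> T \<subseteq> Uf" using S unfolding sopen_def by auto
    fix u assume u: "u \<in> S \<inter> T"
    then obtain a b where ab: "a \<in> C" "u \<in> phi a" "phi a \<subseteq> S" "b \<in> C" "u \<in> phi b" "phi b \<subseteq> T"
      using S T unfolding sopen_def by blast
    then have "meet A a b \<in> C" "u \<in> phi (meet A a b)" "phi (meet A a b) \<subseteq> S \<inter> T"
      using phi_meet by auto
    then show "\<exists>a\<in>C. u \<in> phi a \<and> phi a \<subseteq> S \<inter> T" by blast
  qed
next
  fix K assume K: "\<forall>S\<in>K. sopen S"
  show "sopen (\<Union>K)"
    unfolding sopen_def
  proof (intro conjI ballI)
    show "\<Union>K \<subseteq> Uf" using K unfolding sopen_def by auto
    fix u assume "u \<in> \<Union>K"
    then obtain S where "S \<in> K" "u \<in> S" by auto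
    then obtain a where "a \<in> C" "u \<in> phi a" "phi a \<subseteq> S" using K unfolding sopen_def by blast
    then show "\<exists>a\<in>C. u \<in> phi a \<and> phi a \<subseteq> \<Union>K" using \<open>S \<in> K\<close> by blast
  qed
qed

lemma openin_stone: "openin stone U \<longleftrightarrow> sopen U"
  unfolding stone_def using istop by simp

lemma phi_open: "a \<in> C \<Longrightarrow> openin stone (phi a)"
  unfolding openin_stone sopen_def using phi_sub by blast

lemma topspace_stone: "topspace stone = Uf"
proof
  show "topspace stone \<subseteq> Uf" unfolding topspace_def openin_stone sopen_def by auto
  show "Uf \<subseteq> topspace stone" using phi_open[OF top_in] phi_top
    by (metis openin_subset)
qed

lemma phi_clopen: "a \<in> C \<Longrightarrow> clopen_in stone (phi a)"
  unfolding clopen_in_def closedin_def topspace_stone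
  using phi_open phi_sub phi_cmpl[symmetric] by (simp add: cmpl_in)

lemma gen_inv_fin:
  assumes S: "S \<subseteq> C" and c: "c \<in> gen S"
  shows "\<exists>J. finite J \<and> J \<subseteq> S \<and> (\<forall>u. ufilt u \<and> J \<subseteq> u \<longrightarrow> c \<in> u)"
  using c
proof (induction rule: gen.induct)
  case g_top
  then show ?case using ufilt_top by (intro exI[of _ "{}"]) auto
next
  case (g_S s)
  then show ?case by (intro exI[of _ "{s}"]) auto
next
  case (g_meet a b)
  then obtain J1 J2 where J: "finite J1" "J1 \<subseteq> S" "\<forall>u. ufilt u \<and> J1 \<subseteq> u \<longrightarrow> a \<in> u"
     "finite J2" "J2 \<subseteq> S" "\<forall>u. ufilt u \<and> J2 \<subseteq> u \<longrightarrow> b \<in> u" by blast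
  have "\<forall>u. ufilt u \<and> J1 \<union> J2 \<subseteq> u \<longrightarrow> meet A a b \<in> u"
  proof (intro allI impI)
    fix u assume u: "ufilt u \<and> J1 \<union> J2 \<subseteq> u"
    then have "a \<in> u" "b \<in> u" using J(3,6) by auto
    then show "meet A a b \<in> u" using u ufilt_filt filt_meet by blast
  qed
  then show ?case using J by (intro exI[of _ "J1 \<union> J2"]) auto
next
  case (g_up a b)
  then obtain J where J: "finite J" "J \<subseteq> S" "\<forall>u. ufilt u \<and> J \<subseteq> u \<longrightarrow> a \<in> u" by blast
  have "\<forall>u. ufilt u \<and> J \<subseteq> u \<longrightarrow> b \<in> u"
  proof (intro allI impI)
    fix u assume u: "ufilt u \<and> J \<subseteq> u"
    then have "a \<in> u" using J(3) by auto
    then show "b \<in> u" using u g_up.hyps(2,3) ufilt_filt filt_up by blast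
  qed
  then show ?case using J by blast
qed

lemma basic_compact:
  assumes I: "I \<subseteq> C" and cov: "Uf \<subseteq> \<Union>(phi ` I)"
  shows "\<exists>I'. finite I' \<and> I' \<subseteq> I \<and> Uf \<subseteq> \<Union>(phi ` I')"
proof (cases "bot A \<in> gen (cmpl A ` I)")
  case True
  have SC: "cmpl A ` I \<subseteq> C" using I by auto
  obtain J where J: "finite J" "J \<subseteq> cmpl A ` I" "\<forall>u. ufilt u \<and> J \<subseteq> u \<longrightarrow> bot A \<in> u"
    using gen_inv_fin[OF SC True] by blast
  obtain I' where I': "I' \<subseteq> I" "finite I'" "J = cmpl A ` I'" using finite_subset_image[OF J(1,2)] by blast
  have "Uf \<subseteq> \<Union>(phi ` I')"
  proof
    fix u assume "u \<in> Uf"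
    then have u: "ufilt u" unfolding Uf_def by simp
    then have "\<not> J \<subseteq> u" using J(3) ufilt_bot by blast
    then obtain a where a: "a \<in> I'" "cmpl A a \<notin> u" using I'(3) by auto
    have "a \<in> C" using a I I' by auto
    then have "a \<in> u" using u ufilt_cmpl a(2) by blast
    then show "u \<in> \<Union>(phi ` I')" using a u unfolding phi_def by auto
  qed
  then show ?thesis using I' by blast
next
  case False
  have SC: "cmpl A ` I \<subseteq> C" using I by auto
  obtain u where u: "ufilt u" "gen (cmpl A ` I) \<subseteq> u" using ufilt_ext[OF gen_filt[OF SC] False] by blast
  then have "u \<in> Uf" unfolding Uf_def by simp
  then obtain a where a: "a \<in> I" "u \<in> phi a" using cov by auto
  have "cmpl A a \<in> u" using u a by (auto intro: gen.g_S)
  moreover have "a \<in> C" "a \<in> u" using a I unfolding phi_def by auto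
  ultimately have False using u ufilt_cmpl by blast
  then show ?thesis by simp
qed

lemma compact_stone: "compact_space stone"
  unfolding compact_space_alt topspace_stone
proof (intro allI impI)
  fix \<U> assume U: "(\<forall>U\<in>\<U>. openin stone U) \<and> Uf \<subseteq> \<Union>\<U>"
  let ?I = "{a \<in> C. \<exists>U\<in>\<U>. phi a \<subseteq> U}"
  have "Uf \<subseteq> \<Union>(phi ` ?I)"
  proof
    fix u assume "u \<in> Uf"
    then obtain U where "U \<in> \<U>" "u \<in> U" using U by auto
    then obtain a where "a \<in> C" "u \<in> phi a" "phi a \<subseteq> U" using U unfolding openin_stone sopen_def by blast
    then show "u \<in> \<Union>(phi ` ?I)" using \<open>U \<in> \<U>\<close> by blast
  qed
  moreover have "?I \<subseteq> C" by auto
  ultimately obtain I' where I': "finite I'" "I' \<subseteq> ?I" "Uf \<subseteq> \<Union>(phi ` I')"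
    using basic_compact[of ?I] by blast
  define ch where "ch a = (SOME U. U \<in> \<U> \<and> phi a \<subseteq> U)" for a
  have ch: "ch a \<in> \<U> \<and> phi a \<subseteq> ch a" if "a \<in> I'" for a
  proof -
    have "\<exists>U. U \<in> \<U> \<and> phi a \<subseteq> U" using that I'(2) by blast
    then show ?thesis unfolding ch_def by (rule someI_ex)
  qed
  have "finite (ch ` I')" using I' by simp
  moreover have "ch ` I' \<subseteq> \<U>" using ch by auto
  moreover have "Uf \<subseteq> \<Union>(ch ` I')"
  proof
    fix u assume "u \<in> Uf"
    then obtain a where "a \<in> I'" "u \<in> phi a" using I'(3) by auto
    then show "u \<in> \<Union>(ch ` I')" using ch by blast
  qed
  ultimately show "\<exists>\<F>. finite \<F> \<and> \<F> \<subseteq> \<U> \<and> Uf \<subseteq> \<Union>\<F>" by blast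
qed

lemma hausdorff_stone: "Hausdorff_space stone"
  unfolding Hausdorff_space_def topspace_stone
proof (intro allI impI)
  fix u v assume uv: "u \<in> Uf \<and> v \<in> Uf \<and> u \<noteq> v"
  then have uf: "ufilt u" "ufilt v" unfolding Uf_def by auto
  obtain a where a: "a \<in> C" "(a \<in> u \<and> a \<notin> v) \<or> (a \<in> v \<and> a \<notin> u)"
    using uv uf ufilt_sub by blast
  show "\<exists>U V. openin stone U \<and> openin stone V \<and> u \<in> U \<and> v \<in> V \<and> disjnt U V"
    using a(2)
  proof
    assume "a \<in> u \<and> a \<notin> v"
    then show ?thesis using a(1) uf phi_open[of a] phi_open[of "cmpl A a"] phi_cmpl[of a] phi_sub[of a] ufilt_cmpl
      by (intro exI[of _ "phi a"] exI[of _ "phi (cmpl A a)"]) (auto simp: phi_def disjnt_def Uf_def)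
  next
    assume "a \<in> v \<and> a \<notin> u"
    then show ?thesis using a(1) uf phi_open[of a] phi_open[of "cmpl A a"] phi_cmpl[of a] ufilt_cmpl
      by (intro exI[of _ "phi (cmpl A a)"] exI[of _ "phi a"]) (auto simp: phi_def disjnt_def Uf_def)
  qed
qed

lemma boolean_stone: "boolean_space stone"
  unfolding boolean_space_def
proof (intro conjI compact_stone hausdorff_stone allI impI)
  fix U x assume "openin stone U \<and> x \<in> U"
  then obtain a where "a \<in> C" "x \<in> phi a" "phi a \<subseteq> U" unfolding openin_stone sopen_def by blast
  then show "\<exists>V. clopen_in stone V \<and> x \<in> V \<and> V \<subseteq> U" using phi_clopen by blast
qed

lemma finite_union_phi: "finite F \<Longrightarrow> F \<subseteq> phi ` C \<Longrightarrow> \<exists>a\<in>C. \<Union>F = phi a"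
proof (induction F rule: finite_induct)
  case empty
  then show ?case using phi_bot bot_in by (metis Union_empty)
next
  case (insert x F)
  then obtain a b where "a \<in> C" "\<Union>F = phi a" "b \<in> C" "x = phi b" by auto
  then show ?case using phi_join[of b a] by (intro bexI[of _ "join A b a"]) auto
qed

lemma clopen_phi:
  assumes U: "clopen_in stone U"
  shows "\<exists>a\<in>C. U = phi a"
proof -
  have cU: "compactin stone U"
    using U compact_stone closed_compactin unfolding clopen_in_def compact_space_def
    by (metis closedin_subset)
  let ?I = "{a \<in> C. phi a \<subseteq> U}"
  have "U \<subseteq> \<Union>(phi ` ?I)"
  proof
    fix u assume "u \<in> U"
    then obtain a where "a \<in> C" "u \<in> phi a" "phi a \<subseteq> U" using U unfolding clopen_in_def openin_stone sopen_def by blast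
    then show "u \<in> \<Union>(phi ` ?I)" by blast
  qed
  then obtain F where F: "finite F" "F \<subseteq> phi ` ?I" "U \<subseteq> \<Union>F"
    using compactinD[OF cU, of "phi ` ?I"] phi_open by blast
  then have "\<Union>F = U" by blast
  moreover obtain a where "a \<in> C" "\<Union>F = phi a" using finite_union_phi[OF F(1)] F(2) by blast
  ultimately show ?thesis by blast
qed

end

locale CA = BA + assumes ca: "cond_alg A"
begin

lemma cax1: "\<forall>a\<in>carrier A. \<forall>b\<in>carrier A. imp A a b \<in> carrier A"
  using ca unfolding cond_alg_def by (elim conjE) assumption
lemma cax2: "\<forall>a\<in>carrier A. imp A a (top A) = top A"
  using ca unfolding cond_alg_def by (elim conjE) assumption
lemma cax3: "\<forall>a\<in>carrier A. \<forall>b\<in>carrier A. \<forall>c\<in>carrier A.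
        meet A (imp A a b) (imp A a c) = imp A a (meet A b c)"
  using ca unfolding cond_alg_def by (elim conjE) assumption
lemma cax4: "\<forall>a\<in>carrier A. \<forall>b\<in>carrier A. \<forall>c\<in>carrier A.
        leq A (imp A (join A a b) c) (meet A (imp A a c) (imp A b c))"
  using ca unfolding cond_alg_def by (elim conjE) assumption

lemma imp_in[simp]: "a \<in> C \<Longrightarrow> b \<in> C \<Longrightarrow> imp A a b \<in> C" using cax1 by blast
lemma imp_top[simp]: "a \<in> C \<Longrightarrow> imp A a (top A) = top A" using cax2 by blast
lemma imp_meet: "a \<in> C \<Longrightarrow> b \<in> C \<Longrightarrow> c \<in> C \<Longrightarrow> meet A (imp A a b) (imp A a c) = imp A a (meet A b c)"
  using cax3 by blast
lemma imp_join: "a \<in> C \<Longrightarrow> b \<in> C \<Longrightarrow> c \<in> C \<Longrightarrow> leq A (imp A (join A a b) c) (meet A (imp A a c) (imp A b c))"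
  using cax4 by blast

lemma imp_anti:
  assumes "a \<in> C" "a' \<in> C" "c \<in> C" "leq A a a'"
  shows "leq A (imp A a' c) (imp A a c)"
proof -
  have "join A a a' = a'" using assms leq_join by simp
  then have "leq A (imp A a' c) (meet A (imp A a c) (imp A a' c))" using imp_join[of a a' c] assms by simp
  then show ?thesis using leq_trans[OF _ _ _ _ meet_leq1] assms by simp
qed

lemma imp_mono:
  assumes "a \<in> C" "b \<in> C" "c \<in> C" "leq A b c"
  shows "leq A (imp A a b) (imp A a c)"
  unfolding leq_def using imp_meet[of a b c] assms by (simp add: leq_def)

lemma imp_filt:
  assumes a: "a \<in> C" and x: "ufilt x"
  shows "filt {c \<in> C. imp A a c \<in> x}"
  unfolding filt_def
proof (intro conjI ballI impI)
  show "{c \<in> C. imp A a c \<in> x} \<subseteq> C" by auto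
  show "top A \<in> {c \<in> C. imp A a c \<in> x}" using a x ufilt_top by simp
next
  fix b c assume "b \<in> {c \<in> C. imp A a c \<in> x}" "c \<in> {c \<in> C. imp A a c \<in> x}"
  then show "meet A b c \<in> {c \<in> C. imp A a c \<in> x}"
    using a x imp_meet[of a b c] ufilt_meet[of x "imp A a b" "imp A a c"] by simp
next
  fix b c assume b: "b \<in> {c \<in> C. imp A a c \<in> x}" and c: "c \<in> C" "leq A b c"
  then have "leq A (imp A a b) (imp A a c)" using imp_mono a by simp
  then show "c \<in> {c \<in> C. imp A a c \<in> x}" using b c a x ufilt_filt filt_up[of x "imp A a b" "imp A a c"] by simp
qed

lemma imp_witness:
  assumes x: "ufilt x" and a: "a \<in> C" and b: "b \<in> C" and nx: "imp A a b \<notin> x"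
  shows "\<exists>y. ufilt y \<and> (\<forall>c\<in>C. imp A a c \<in> x \<longrightarrow> c \<in> y) \<and> b \<notin> y"
proof -
  let ?F = "{c \<in> C. imp A a c \<in> x}"
  have "\<forall>m\<in>?F. meet A m (cmpl A b) \<noteq> bot A"
  proof
    fix m assume m: "m \<in> ?F"
    show "meet A m (cmpl A b) \<noteq> bot A"
    proof
      assume "meet A m (cmpl A b) = bot A"
      then have "leq A m b" using leq_iff_meet_cmpl[of m b] m b by simp
      then have "leq A (imp A a m) (imp A a b)" using imp_mono a b m by simp
      then have "imp A a b \<in> x" using m a b x ufilt_filt filt_up[of x "imp A a m" "imp A a b"] by simp
      then show False using nx by simp
    qed
  qed
  then obtain y where y: "ufilt y" "?F \<subseteq> y" "cmpl A b \<in> y"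
    using ext_insert[OF imp_filt[OF a x] cmpl_in[OF b]] by blast
  then show ?thesis using ufilt_cmpl b by blast
qed

definition Tst :: "'a set \<Rightarrow> 'a set set \<Rightarrow> 'a set \<Rightarrow> bool" where
  "Tst x Y y \<longleftrightarrow> x \<in> Uf \<and> y \<in> Uf \<and> closedin stone Y \<and>
     (\<forall>a\<in>C. Y \<subseteq> phi a \<longrightarrow> (\<forall>b\<in>C. imp A a b \<in> x \<longrightarrow> b \<in> y))"

lemma phi_closed: "a \<in> C \<Longrightarrow> closedin stone (phi a)"
  using phi_clopen clopen_in_def by blast

lemma Timp_phi:
  assumes a: "a \<in> C" and b: "b \<in> C"
  shows "Timp stone Tst (phi a) (phi b) = phi (imp A a b)"
proof
  show "Timp stone Tst (phi a) (phi b) \<subseteq> phi (imp A a b)"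
  proof
    fix x assume x: "x \<in> Timp stone Tst (phi a) (phi b)"
    then have xU: "x \<in> Uf" and H: "\<forall>Z. closedin stone Z \<and> Z \<subseteq> phi a \<longrightarrow> Tsec Tst x Z \<subseteq> phi b"
      unfolding Timp_def topspace_stone by auto
    have ux: "ufilt x" using xU Uf_def by simp
    show "x \<in> phi (imp A a b)"
    proof (rule ccontr)
      assume "x \<notin> phi (imp A a b)"
      then have "imp A a b \<notin> x" using ux unfolding phi_def by simp
      then obtain y where y: "ufilt y" "\<forall>c\<in>C. imp A a c \<in> x \<longrightarrow> c \<in> y" "b \<notin> y"
        using imp_witness ux a b by blast
      have "Tst x (phi a) y"
        unfolding Tst_def
      proof (intro conjI ballI impI)
        show "x \<in> Uf" by fact
        show "y \<in> Uf" using y Uf_def by simp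
        show "closedin stone (phi a)" using phi_closed a by simp
        fix a' c assume a': "a' \<in> C" "phi a \<subseteq> phi a'" and c: "c \<in> C" "imp A a' c \<in> x"
        have "leq A a a'" using phi_leq a a' by simp
        then have "leq A (imp A a' c) (imp A a c)" using imp_anti a a' c by simp
        then have "imp A a c \<in> x" using c a a' ux ufilt_filt filt_up[of x "imp A a' c" "imp A a c"] by simp
        then show "c \<in> y" using y c by simp
      qed
      then have "y \<in> phi b" using H phi_closed a unfolding Tsec_def by blast
      then show False using y unfolding phi_def by simp
    qed
  qed
next
  show "phi (imp A a b) \<subseteq> Timp stone Tst (phi a) (phi b)"
  proof
    fix x assume x: "x \<in> phi (imp A a b)"
    then have ux: "ufilt x" "imp A a b \<in> x" unfolding phi_def by auto
    have "x \<in> Uf" using ux Uf_def by simp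
    moreover have "\<forall>Z. closedin stone Z \<and> Z \<subseteq> phi a \<longrightarrow> Tsec Tst x Z \<subseteq> phi b"
    proof (intro allI impI subsetI)
      fix Z y assume Z: "closedin stone Z \<and> Z \<subseteq> phi a" and y: "y \<in> Tsec Tst x Z"
      then have "Tst x Z y" unfolding Tsec_def by simp
      then have "y \<in> Uf" "b \<in> y" using Z a b ux unfolding Tst_def by auto
      then show "y \<in> phi b" unfolding phi_def Uf_def by simp
    qed
    ultimately show "x \<in> Timp stone Tst (phi a) (phi b)"
      unfolding Timp_def topspace_stone by blast
  qed
qed

lemma cond_space_stone: "cond_space stone Tst"
proof -
  have c1: "\<forall>x Y y. Tst x Y y \<longrightarrow> x \<in> topspace stone \<and> closedin stone Y \<and> y \<in> topspace stone"
    unfolding Tst_def topspace_stone by simp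
  have c2: "closedin stone (Tsec Tst x Y)" if xY: "x \<in> topspace stone \<and> closedin stone Y" for x Y
  proof -
  let ?S = "Tsec Tst x Y"
  have S: "?S = {y \<in> Uf. \<forall>a\<in>C. Y \<subseteq> phi a \<longrightarrow> (\<forall>b\<in>C. imp A a b \<in> x \<longrightarrow> b \<in> y)}"
    using xY unfolding Tsec_def Tst_def topspace_stone by auto
  have "sopen (Uf - ?S)"
    unfolding sopen_def
  proof (intro conjI ballI)
    show "Uf - ?S \<subseteq> Uf" by auto
    fix y assume y: "y \<in> Uf - ?S"
    then obtain a b where ab: "a \<in> C" "Y \<subseteq> phi a" "b \<in> C" "imp A a b \<in> x" "b \<notin> y"
      using S by auto
    have "y \<in> phi (cmpl A b)" using y ab phi_cmpl unfolding phi_def Uf_def by auto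
    moreover have "phi (cmpl A b) \<subseteq> Uf - ?S"
    proof
      fix z assume z: "z \<in> phi (cmpl A b)"
      then have "z \<in> Uf" "b \<notin> z" using ab phi_cmpl phi_sub unfolding phi_def by auto
      then show "z \<in> Uf - ?S" using S ab by auto
    qed
    ultimately show "\<exists>c\<in>C. y \<in> phi c \<and> phi c \<subseteq> Uf - ?S" using ab(3) cmpl_in by blast
  qed
  then show "closedin stone ?S" unfolding closedin_def topspace_stone openin_stone using S by auto
  qed
  have c3: "clopen_in stone (Timp stone Tst U V)" if UV: "clopen_in stone U \<and> clopen_in stone V" for U V
  proof -
    obtain a b where "a \<in> C" "U = phi a" "b \<in> C" "V = phi b" using UV clopen_phi by blast
    then show ?thesis using Timp_phi phi_clopen imp_in by simp
  qed
  have c4: "Tst x Y y = (\<forall>U. clopen_in stone U \<and> Y \<subseteq> U \<longrightarrow> Tst x U y)" if Y: "closedin stone Y" for x Y y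
  proof
    assume T: "Tst x Y y"
    show "\<forall>U. clopen_in stone U \<and> Y \<subseteq> U \<longrightarrow> Tst x U y"
      using T unfolding Tst_def clopen_in_def by blast
  next
    assume H: "\<forall>U. clopen_in stone U \<and> Y \<subseteq> U \<longrightarrow> Tst x U y"
    have "Y \<subseteq> Uf" using closedin_subset[OF Y] topspace_stone by simp
    moreover have "clopen_in stone Uf" using phi_clopen[OF top_in] phi_top by simp
    ultimately have "Tst x Uf y" using H by blast
    then have xy: "x \<in> Uf" "y \<in> Uf" unfolding Tst_def by auto
    show "Tst x Y y"
      unfolding Tst_def
    proof (intro conjI xy Y ballI impI)
      fix a b assume a: "a \<in> C" "Y \<subseteq> phi a" and b: "b \<in> C" "imp A a b \<in> x"
      have "Tst x (phi a) y" using H phi_clopen a by blast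
      then show "b \<in> y" using a b unfolding Tst_def by blast
    qed
  qed
  have c2': "\<forall>x Y. x \<in> topspace stone \<and> closedin stone Y \<longrightarrow> closedin stone (Tsec Tst x Y)"
    using c2 by blast
  have c3': "\<forall>U V. clopen_in stone U \<and> clopen_in stone V \<longrightarrow> clopen_in stone (Timp stone Tst U V)"
    using c3 by blast
  have c4': "\<forall>x Y y. closedin stone Y \<longrightarrow>
        (Tst x Y y \<longleftrightarrow> (\<forall>U. clopen_in stone U \<and> Y \<subseteq> U \<longrightarrow> Tst x U y))"
    using c4 by (intro allI impI)
  show ?thesis unfolding cond_space_def using boolean_stone c1 c2' c3' c4' by (intro conjI)
qed

definition kinv :: "'a set set \<Rightarrow> 'a" where "kinv U = inv_into C phi U"

lemma inj_phi: "inj_on phi C" unfolding inj_on_def using phi_inj by blast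

lemma kinv_phi: "a \<in> C \<Longrightarrow> kinv (phi a) = a"
  unfolding kinv_def using inv_into_f_f[OF inj_phi] by simp

lemma kinv_clopen: "clopen_in stone U \<Longrightarrow> kinv U \<in> C \<and> phi (kinv U) = U"
proof -
  assume "clopen_in stone U"
  then obtain a where "a \<in> C" "U = phi a" using clopen_phi by blast
  then show ?thesis using kinv_phi by simp
qed

lemma iso_stone: "cond_iso A (clop_alg stone Tst)"
  unfolding cond_iso_def
proof (intro exI conjI)
  show "cond_hom A (clop_alg stone Tst) phi"
    unfolding cond_hom_def clop_alg_def
    by (simp add: phi_clopen phi_meet phi_join Timp_phi phi_cmpl topspace_stone phi_bot phi_top)
  show "cond_hom (clop_alg stone Tst) A kinv"
    unfolding cond_hom_def clop_alg_def
  proof (simp, intro conjI ballI allI impI)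
    fix U assume U: "clopen_in stone U"
    show "kinv U \<in> C" using kinv_clopen[OF U] by simp
    have k: "kinv U \<in> C" "phi (kinv U) = U" using kinv_clopen[OF U] by auto
    then have "topspace stone - U = phi (cmpl A (kinv U))" using phi_cmpl[of "kinv U"] topspace_stone by simp
    then show "kinv (topspace stone - U) = cmpl A (kinv U)" using kinv_phi k by simp
  next
    fix U V assume U: "clopen_in stone U" and V: "clopen_in stone V"
    have ab: "kinv U \<in> C" "U = phi (kinv U)" "kinv V \<in> C" "V = phi (kinv V)" using kinv_clopen U V by auto
    define a where "a = kinv U"
    define b where "b = kinv V"
    have ab: "a \<in> C" "U = phi a" "b \<in> C" "V = phi b" using ab a_def b_def by auto
    have "U \<inter> V = phi (meet A a b)" using ab phi_meet by simp
    then show "kinv (U \<inter> V) = meet A (kinv U) (kinv V)" using ab kinv_phi by simp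
    have "U \<union> V = phi (join A a b)" using ab phi_join by simp
    then show "kinv (U \<union> V) = join A (kinv U) (kinv V)" using ab kinv_phi by simp
    have "Timp stone Tst U V = phi (imp A a b)" using ab Timp_phi by simp
    then show "kinv (Timp stone Tst U V) = imp A (kinv U) (kinv V)" using ab kinv_phi by simp
  next
    show "kinv {} = bot A" using phi_bot kinv_phi[OF bot_in] by simp
    show "kinv (topspace stone) = top A" using phi_top kinv_phi[OF top_in] topspace_stone by simp
  qed
  show "\<forall>a\<in>C. kinv (phi a) = a" using kinv_phi by simp
  show "\<forall>b\<in>carrier (clop_alg stone Tst). phi (kinv b) = b"
    unfolding clop_alg_def using kinv_clopen by simp
qed

end

lemma ess_surj:
  fixes A :: "'a calg"
  assumes "cond_alg A"
  shows "\<exists>(X::'a set topology) T. cond_space X T \<and> cond_iso A (clop_alg X T)"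
proof -
  interpret CA A
    using assms unfolding CA_def CA_axioms_def BA_def cond_alg_def by simp
  show ?thesis using cond_space_stone iso_stone by blast
qed

lemma cs_dom: "cond_space X T \<Longrightarrow> T x Y y \<Longrightarrow> x \<in> topspace X \<and> closedin X Y \<and> y \<in> topspace X"
  unfolding cond_space_def by blast
lemma cs_T2: "cond_space X T \<Longrightarrow> clopen_in X U \<Longrightarrow> clopen_in X V \<Longrightarrow> clopen_in X (Timp X T U V)"
  unfolding cond_space_def by blast
lemma cs_T3: "cond_space X T \<Longrightarrow> closedin X Y \<Longrightarrow> T x Y y \<longleftrightarrow> (\<forall>U. clopen_in X U \<and> Y \<subseteq> U \<longrightarrow> T x U y)"
  unfolding cond_space_def by blast
lemma cs_bool: "cond_space X T \<Longrightarrow> boolean_space X"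
  unfolding cond_space_def by blast

lemma clopen_sub: "clopen_in X U \<Longrightarrow> U \<subseteq> topspace X"
  unfolding clopen_in_def using openin_subset by blast

lemma clopen_Int: "clopen_in X U \<Longrightarrow> clopen_in X V \<Longrightarrow> clopen_in X (U \<inter> V)"
  unfolding clopen_in_def by auto
lemma clopen_Un: "clopen_in X U \<Longrightarrow> clopen_in X V \<Longrightarrow> clopen_in X (U \<union> V)"
  unfolding clopen_in_def by auto
lemma clopen_diff: "clopen_in X U \<Longrightarrow> clopen_in X (topspace X - U)"
  unfolding clopen_in_def by auto
lemma clopen_empty: "clopen_in X {}"
  unfolding clopen_in_def by auto
lemma clopen_top: "clopen_in X (topspace X)"
  unfolding clopen_in_def by auto

lemma Timp_simp:
  assumes cs: "cond_space X T" and U: "clopen_in X U"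
  shows "Timp X T U V = {x \<in> topspace X. Tsec T x U \<subseteq> V}"
proof
  show "Timp X T U V \<subseteq> {x \<in> topspace X. Tsec T x U \<subseteq> V}"
    using U unfolding Timp_def clopen_in_def by blast
next
  show "{x \<in> topspace X. Tsec T x U \<subseteq> V} \<subseteq> Timp X T U V"
  proof
    fix x assume x: "x \<in> {x \<in> topspace X. Tsec T x U \<subseteq> V}"
    have "Tsec T x Z \<subseteq> V" if Z: "closedin X Z" "Z \<subseteq> U" for Z
    proof
      fix y assume "y \<in> Tsec T x Z"
      then have "T x Z y" unfolding Tsec_def by simp
      then have "T x U y" using cs_T3[OF cs Z(1)] Z(2) U by blast
      then show "y \<in> V" using x unfolding Tsec_def by auto
    qed
    then show "x \<in> Timp X T U V" using x unfolding Timp_def by blast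
  qed
qed

lemma part1: "cond_space X T \<Longrightarrow> cond_alg (clop_alg X T)"
proof -
  assume cs: "cond_space X T"
  have ba: "boolean_alg (clop_alg X T)"
    unfolding boolean_alg_def
  proof (intro conjI)
    show "bot (clop_alg X T) \<in> carrier (clop_alg X T)" unfolding clop_alg_def using clopen_empty by simp
    show "top (clop_alg X T) \<in> carrier (clop_alg X T)" unfolding clop_alg_def using clopen_top by simp
    show "\<forall>a\<in>carrier (clop_alg X T). \<forall>b\<in>carrier (clop_alg X T).
      meet (clop_alg X T) a b \<in> carrier (clop_alg X T) \<and> join (clop_alg X T) a b \<in> carrier (clop_alg X T)"
      unfolding clop_alg_def by (simp add: clopen_Int clopen_Un)
    show "\<forall>a\<in>carrier (clop_alg X T). cmpl (clop_alg X T) a \<in> carrier (clop_alg X T)"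
      unfolding clop_alg_def by (simp add: clopen_diff)
    show "\<forall>a\<in>carrier (clop_alg X T). \<forall>b\<in>carrier (clop_alg X T).
       meet (clop_alg X T) a b = meet (clop_alg X T) b a \<and> join (clop_alg X T) a b = join (clop_alg X T) b a"
      unfolding clop_alg_def by auto
    show "\<forall>a\<in>carrier (clop_alg X T). \<forall>b\<in>carrier (clop_alg X T). \<forall>c\<in>carrier (clop_alg X T).
       meet (clop_alg X T) (meet (clop_alg X T) a b) c = meet (clop_alg X T) a (meet (clop_alg X T) b c) \<and>
       join (clop_alg X T) (join (clop_alg X T) a b) c = join (clop_alg X T) a (join (clop_alg X T) b c) \<and>
       meet (clop_alg X T) a (join (clop_alg X T) b c) =
       join (clop_alg X T) (meet (clop_alg X T) a b) (meet (clop_alg X T) a c) \<and>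
       join (clop_alg X T) a (meet (clop_alg X T) b c) =
       meet (clop_alg X T) (join (clop_alg X T) a b) (join (clop_alg X T) a c)"
      unfolding clop_alg_def by auto
    show "\<forall>a\<in>carrier (clop_alg X T). \<forall>b\<in>carrier (clop_alg X T).
       meet (clop_alg X T) a (join (clop_alg X T) a b) = a \<and> join (clop_alg X T) a (meet (clop_alg X T) a b) = a"
      unfolding clop_alg_def by auto
    show "\<forall>a\<in>carrier (clop_alg X T). meet (clop_alg X T) a (top (clop_alg X T)) = a \<and> join (clop_alg X T) a (bot (clop_alg X T)) = a"
      unfolding clop_alg_def using clopen_sub by fastforce
    show "\<forall>a\<in>carrier (clop_alg X T). meet (clop_alg X T) a (cmpl (clop_alg X T) a) = bot (clop_alg X T) \<and>
       join (clop_alg X T) a (cmpl (clop_alg X T) a) = top (clop_alg X T)"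
      unfolding clop_alg_def using clopen_sub by fastforce
  qed
  have i1: "\<forall>a\<in>carrier (clop_alg X T). \<forall>b\<in>carrier (clop_alg X T). imp (clop_alg X T) a b \<in> carrier (clop_alg X T)"
    unfolding clop_alg_def using cs_T2[OF cs] by simp
  have i2: "\<forall>a\<in>carrier (clop_alg X T). imp (clop_alg X T) a (top (clop_alg X T)) = top (clop_alg X T)"
    unfolding clop_alg_def Timp_def Tsec_def using cs_dom[OF cs] by auto
  have i3: "\<forall>a\<in>carrier (clop_alg X T). \<forall>b\<in>carrier (clop_alg X T). \<forall>c\<in>carrier (clop_alg X T).
        meet (clop_alg X T) (imp (clop_alg X T) a b) (imp (clop_alg X T) a c) = imp (clop_alg X T) a (meet (clop_alg X T) b c)"
    unfolding clop_alg_def Timp_def by auto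
  have i4: "\<forall>a\<in>carrier (clop_alg X T). \<forall>b\<in>carrier (clop_alg X T). \<forall>c\<in>carrier (clop_alg X T).
        leq (clop_alg X T) (imp (clop_alg X T) (join (clop_alg X T) a b) c) (meet (clop_alg X T) (imp (clop_alg X T) a c) (imp (clop_alg X T) b c))"
    unfolding clop_alg_def Timp_def leq_def by auto
  show ?thesis unfolding cond_alg_def using ba i1 i2 i3 i4 by blast
qed

lemma preim_eq: "preim X f U = {x \<in> topspace X. f x \<in> U}"
  unfolding preim_def by auto

lemma preim_clopen: "continuous_map X Y f \<Longrightarrow> clopen_in Y U \<Longrightarrow> clopen_in X (preim X f U)"
  unfolding clopen_in_def preim_eq
  using openin_continuous_map_preimage closedin_continuous_map_preimage by blast

lemma part2:
  assumes cs1: "cond_space X1 T1" and cs2: "cond_space X2 T2" and cf: "cond_fun X1 T1 X2 T2 f"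
  shows "cond_hom (clop_alg X2 T2) (clop_alg X1 T1) (preim X1 f)"
proof -
  have cm: "continuous_map X1 X2 f" using cf unfolding cond_fun_def by blast
  have fm: "\<And>x. x \<in> topspace X1 \<Longrightarrow> f x \<in> topspace X2"
    using continuous_map_image_subset_topspace[OF cm] by blast
  have cfe: "\<And>x U V. x \<in> topspace X1 \<Longrightarrow> clopen_in X2 U \<Longrightarrow> clopen_in X2 V \<Longrightarrow>
      (Tsec T1 x (preim X1 f U) \<subseteq> preim X1 f V \<longleftrightarrow> Tsec T2 (f x) U \<subseteq> V)"
  proof -
    fix x U V assume "x \<in> topspace X1" "clopen_in X2 U" "clopen_in X2 V"
    then show "(Tsec T1 x (preim X1 f U) \<subseteq> preim X1 f V \<longleftrightarrow> Tsec T2 (f x) U \<subseteq> V)"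
      using cf unfolding cond_fun_def preim_def by blast
  qed
  have imp: "preim X1 f (Timp X2 T2 U V) = Timp X1 T1 (preim X1 f U) (preim X1 f V)"
    if U: "clopen_in X2 U" and V: "clopen_in X2 V" for U V
  proof -
    have "preim X1 f (Timp X2 T2 U V) = {x \<in> topspace X1. f x \<in> Timp X2 T2 U V}"
      by (rule preim_eq)
    also have "\<dots> = {x \<in> topspace X1. Tsec T2 (f x) U \<subseteq> V}"
      unfolding Timp_simp[OF cs2 U] using fm by blast
    also have "\<dots> = {x \<in> topspace X1. Tsec T1 x (preim X1 f U) \<subseteq> preim X1 f V}"
      using cfe U V by blast
    also have "\<dots> = Timp X1 T1 (preim X1 f U) (preim X1 f V)"
      using Timp_simp[OF cs1 preim_clopen[OF cm U]] by simp
    finally show ?thesis .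
  qed
  show ?thesis
    unfolding cond_hom_def
  proof (intro conjI ballI)
    fix a assume "a \<in> carrier (clop_alg X2 T2)"
    then show "preim X1 f a \<in> carrier (clop_alg X1 T1)"
      unfolding clop_alg_def using preim_clopen[OF cm] by simp
  next
    fix a b assume a: "a \<in> carrier (clop_alg X2 T2)" and b: "b \<in> carrier (clop_alg X2 T2)"
    show "preim X1 f (meet (clop_alg X2 T2) a b) = meet (clop_alg X1 T1) (preim X1 f a) (preim X1 f b)"
      unfolding clop_alg_def preim_def by auto
    show "preim X1 f (join (clop_alg X2 T2) a b) = join (clop_alg X1 T1) (preim X1 f a) (preim X1 f b)"
      unfolding clop_alg_def preim_def by auto
    show "preim X1 f (imp (clop_alg X2 T2) a b) = imp (clop_alg X1 T1) (preim X1 f a) (preim X1 f b)"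
      using a b imp unfolding clop_alg_def by simp
  next
    fix a assume "a \<in> carrier (clop_alg X2 T2)"
    show "preim X1 f (cmpl (clop_alg X2 T2) a) = cmpl (clop_alg X1 T1) (preim X1 f a)"
      unfolding clop_alg_def preim_def using fm by auto
  next
    show "preim X1 f (bot (clop_alg X2 T2)) = bot (clop_alg X1 T1)"
      unfolding clop_alg_def preim_def by auto
    show "preim X1 f (top (clop_alg X2 T2)) = top (clop_alg X1 T1)"
      unfolding clop_alg_def preim_def using fm by auto
  qed
qed

lemma part3: "cond_space X T \<Longrightarrow> \<forall>U\<in>carrier (clop_alg X T). preim X id U = U"
proof
  fix U assume "U \<in> carrier (clop_alg X T)"
  then have "U \<subseteq> topspace X" unfolding clop_alg_def using clopen_sub by simp
  then show "preim X id U = U" unfolding preim_def by auto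
qed

lemma part4:
  assumes "cond_fun X1 T1 X2 T2 f"
  shows "\<forall>U\<in>carrier (clop_alg X3 T3). preim X1 (g \<circ> f) U = preim X1 f (preim X2 g U)"
proof -
  have "continuous_map X1 X2 f" using assms unfolding cond_fun_def by blast
  then have "\<And>x. x \<in> topspace X1 \<Longrightarrow> f x \<in> topspace X2"
    using continuous_map_image_subset_topspace by blast
  then show ?thesis unfolding preim_def by auto
qed

lemma separate_pts:
  assumes b: "boolean_space X" and x: "x \<in> topspace X" and y: "y \<in> topspace X" and xy: "x \<noteq> y"
  shows "\<exists>U. clopen_in X U \<and> x \<in> U \<and> y \<notin> U"
proof -
  have "Hausdorff_space X" using b unfolding boolean_space_def by blast
  then obtain U V where UV: "openin X U" "openin X V" "x \<in> U" "y \<in> V" "disjnt U V"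
    using x y xy unfolding Hausdorff_space_def by blast
  then obtain W where "clopen_in X W" "x \<in> W" "W \<subseteq> U" using b unfolding boolean_space_def by blast
  then show ?thesis using UV unfolding disjnt_def by blast
qed

lemma part5:
  assumes cs2: "cond_space X2 T2" and cf: "cond_fun X1 T1 X2 T2 f" and cg: "cond_fun X1 T1 X2 T2 g"
    and eq: "\<forall>U\<in>carrier (clop_alg X2 T2). preim X1 f U = preim X1 g U"
  shows "\<forall>x\<in>topspace X1. f x = g x"
proof
  fix x assume x: "x \<in> topspace X1"
  have "f x \<in> topspace X2" "g x \<in> topspace X2"
    using cf cg x continuous_map_image_subset_topspace unfolding cond_fun_def by blast+
  show "f x = g x"
  proof (rule ccontr)
    assume "f x \<noteq> g x"
    then obtain U where U: "clopen_in X2 U" "f x \<in> U" "g x \<notin> U"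
      using separate_pts[OF cs_bool[OF cs2]] \<open>f x \<in> topspace X2\<close> \<open>g x \<in> topspace X2\<close> by blast
    then have "preim X1 f U = preim X1 g U" using eq unfolding clop_alg_def by simp
    then show False using U x unfolding preim_def by auto
  qed
qed

lemma part6:
  assumes cs1: "cond_space X1 T1" and cs2: "cond_space X2 T2"
    and h: "cond_hom (clop_alg X2 T2) (clop_alg X1 T1) h"
  shows "\<exists>f. cond_fun X1 T1 X2 T2 f \<and> (\<forall>U\<in>carrier (clop_alg X2 T2). h U = preim X1 f U)"
proof -
  have hC: "\<And>U. clopen_in X2 U \<Longrightarrow> clopen_in X1 (h U)"
    using h unfolding cond_hom_def clop_alg_def by simp
  have hI: "\<And>U V. clopen_in X2 U \<Longrightarrow> clopen_in X2 V \<Longrightarrow> h (U \<inter> V) = h U \<inter> h V"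
    using h unfolding cond_hom_def clop_alg_def by simp
  have hImp: "\<And>U V. clopen_in X2 U \<Longrightarrow> clopen_in X2 V \<Longrightarrow> h (Timp X2 T2 U V) = Timp X1 T1 (h U) (h V)"
    using h unfolding cond_hom_def clop_alg_def by simp
  have hD: "\<And>U. clopen_in X2 U \<Longrightarrow> h (topspace X2 - U) = topspace X1 - h U"
    using h unfolding cond_hom_def clop_alg_def by simp
  have hE: "h {} = {}" using h unfolding cond_hom_def clop_alg_def by simp
  have hT: "h (topspace X2) = topspace X1" using h unfolding cond_hom_def clop_alg_def by simp
  have ex: "\<exists>y. y \<in> topspace X2 \<and> (\<forall>U. clopen_in X2 U \<longrightarrow> (y \<in> U \<longleftrightarrow> x \<in> h U))"
    if x: "x \<in> topspace X1" for x
  proof -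
    define K where "K = {U. clopen_in X2 U \<and> x \<in> h U}"
    have fin: "clopen_in X2 (topspace X2 \<inter> \<Inter>F) \<and> x \<in> h (topspace X2 \<inter> \<Inter>F)"
      if "finite F" "F \<subseteq> K" for F
      using that
    proof (induction F rule: finite_induct)
      case empty
      then show ?case using clopen_top hT x by simp
    next
      case (insert U F)
      then have U: "clopen_in X2 U" "x \<in> h U" and IH: "clopen_in X2 (topspace X2 \<inter> \<Inter>F)" "x \<in> h (topspace X2 \<inter> \<Inter>F)"
        unfolding K_def by auto
      have eq: "topspace X2 \<inter> \<Inter>(insert U F) = U \<inter> (topspace X2 \<inter> \<Inter>F)"
        using clopen_sub[OF U(1)] by auto
      show ?case unfolding eq using U IH clopen_Int hI by simp
    qed
    have "\<exists>y\<in>topspace X2. \<forall>U\<in>K. y \<in> U"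
    proof (rule ccontr)
      assume nc: "\<not> (\<exists>y\<in>topspace X2. \<forall>U\<in>K. y \<in> U)"
      define UU where "UU = (\<lambda>U. topspace X2 - U) ` K"
      have op: "\<forall>V\<in>UU. openin X2 V"
      proof
        fix V assume "V \<in> UU"
        then obtain U where "U \<in> K" "V = topspace X2 - U" unfolding UU_def by blast
        then show "openin X2 V" unfolding K_def clopen_in_def by auto
      qed
      have cov: "topspace X2 \<subseteq> \<Union>UU"
      proof
        fix y assume y: "y \<in> topspace X2"
        then obtain U where "U \<in> K" "y \<notin> U" using nc by blast
        then show "y \<in> \<Union>UU" unfolding UU_def using y by blast
      qed
      have "compact_space X2" using cs_bool[OF cs2] unfolding boolean_space_def by blast
      then have "\<exists>FF. finite FF \<and> FF \<subseteq> UU \<and> topspace X2 \<subseteq> \<Union>FF"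
        unfolding compact_space_alt using op cov by blast
      then obtain FF where FF: "finite FF" "FF \<subseteq> UU" "topspace X2 \<subseteq> \<Union>FF" by blast
      have FF2: "FF \<subseteq> (\<lambda>U. topspace X2 - U) ` K" using FF(2) unfolding UU_def .
      have "\<exists>F\<subseteq>K. finite F \<and> FF = (\<lambda>U. topspace X2 - U) ` F"
        by (rule finite_subset_image[OF FF(1) FF2])
      then obtain F where F: "F \<subseteq> K" "finite F" "FF = (\<lambda>U. topspace X2 - U) ` F"
        by blast
      have "topspace X2 \<inter> \<Inter>F = {}"
      proof (rule equals0I)
        fix y assume y: "y \<in> topspace X2 \<inter> \<Inter>F"
        then have "y \<in> \<Union>FF" using FF(3) by blast
        then obtain U where "U \<in> F" "y \<notin> U" using F(3) by blast
        then show False using y by blast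
      qed
      then show False using fin[OF F(2,1)] hE by simp
    qed
    then obtain y where y: "y \<in> topspace X2" "\<forall>U\<in>K. y \<in> U" by blast
    have "y \<in> U \<longleftrightarrow> x \<in> h U" if U: "clopen_in X2 U" for U
    proof
      assume yU: "y \<in> U"
      show "x \<in> h U"
      proof (rule ccontr)
        assume "x \<notin> h U"
        then have "x \<in> h (topspace X2 - U)" using hD[OF U] x by simp
        then have "topspace X2 - U \<in> K" unfolding K_def using clopen_diff[OF U] by simp
        then show False using y yU by blast
      qed
    next
      assume "x \<in> h U" then show "y \<in> U" using y U unfolding K_def by blast
    qed
    then show ?thesis using y by blast
  qed
  define f where "f x = (SOME y. y \<in> topspace X2 \<and> (\<forall>U. clopen_in X2 U \<longrightarrow> (y \<in> U \<longleftrightarrow> x \<in> h U)))" for x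
  have fp: "f x \<in> topspace X2 \<and> (\<forall>U. clopen_in X2 U \<longrightarrow> (f x \<in> U \<longleftrightarrow> x \<in> h U))"
    if "x \<in> topspace X1" for x
    unfolding f_def by (rule someI_ex) (rule ex[OF that])
  have hpre: "h U = preim X1 f U" if U: "clopen_in X2 U" for U
  proof -
    have "h U \<subseteq> topspace X1" using clopen_sub hC U by blast
    then show ?thesis unfolding preim_def using fp U by blast
  qed
  have cm: "continuous_map X1 X2 f"
    unfolding continuous_map
  proof (intro conjI allI impI)
    show "f ` topspace X1 \<subseteq> topspace X2" using fp by blast
  next
    fix U assume U: "openin X2 U"
    have eq: "{x \<in> topspace X1. f x \<in> U} = \<Union>{h W | W. clopen_in X2 W \<and> W \<subseteq> U}"
    proof
      show "{x \<in> topspace X1. f x \<in> U} \<subseteq> \<Union>{h W | W. clopen_in X2 W \<and> W \<subseteq> U}"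
      proof
        fix x assume x: "x \<in> {x \<in> topspace X1. f x \<in> U}"
        then obtain W where W: "clopen_in X2 W" "f x \<in> W" "W \<subseteq> U"
          using cs_bool[OF cs2] U unfolding boolean_space_def by blast
        then have "x \<in> h W" using fp x by blast
        then show "x \<in> \<Union>{h W | W. clopen_in X2 W \<and> W \<subseteq> U}" using W by blast
      qed
    next
      show "\<Union>{h W | W. clopen_in X2 W \<and> W \<subseteq> U} \<subseteq> {x \<in> topspace X1. f x \<in> U}"
      proof
        fix x assume "x \<in> \<Union>{h W | W. clopen_in X2 W \<and> W \<subseteq> U}"
        then obtain W where W: "clopen_in X2 W" "W \<subseteq> U" "x \<in> h W" by blast
        then have "x \<in> topspace X1" using clopen_sub hC by blast
        then show "x \<in> {x \<in> topspace X1. f x \<in> U}" using W fp by blast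
      qed
    qed
    have "openin X1 (\<Union>{h W | W. clopen_in X2 W \<and> W \<subseteq> U})"
      using hC unfolding clopen_in_def by (intro openin_Union) blast
    then show "openin X1 {x \<in> topspace X1. f x \<in> U}" using eq by simp
  qed
  have cf: "cond_fun X1 T1 X2 T2 f"
    unfolding cond_fun_def
  proof (intro conjI cm ballI allI impI)
    fix x U V assume x: "x \<in> topspace X1" and UV: "clopen_in X2 U \<and> clopen_in X2 V"
    then have U: "clopen_in X2 U" and V: "clopen_in X2 V" by auto
    have pU: "f -` U \<inter> topspace X1 = h U" using hpre[OF U] unfolding preim_def by simp
    have pV: "f -` V \<inter> topspace X1 = h V" using hpre[OF V] unfolding preim_def by simp
    have "Tsec T1 x (h U) \<subseteq> h V \<longleftrightarrow> x \<in> Timp X1 T1 (h U) (h V)"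
      using Timp_simp[OF cs1 hC[OF U]] x by blast
    also have "\<dots> \<longleftrightarrow> x \<in> h (Timp X2 T2 U V)" using hImp[OF U V] by simp
    also have "\<dots> \<longleftrightarrow> f x \<in> Timp X2 T2 U V" using fp[OF x] cs_T2[OF cs2 U V] by blast
    also have "\<dots> \<longleftrightarrow> Tsec T2 (f x) U \<subseteq> V" using Timp_simp[OF cs2 U] fp[OF x] by blast
    finally show "Tsec T1 x (f -` U \<inter> topspace X1) \<subseteq> f -` V \<inter> topspace X1 \<longleftrightarrow> Tsec T2 (f x) U \<subseteq> V"
      unfolding pU pV .
  qed
  show ?thesis using cf hpre unfolding clop_alg_def by auto
qed

theorem theorem6p5:
  shows
  "\<comment> \<open>the functor Clop : CS \<rightarrow> CA is well defined on objects\<close>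
   (\<forall>(X::'x topology) T. cond_space X T \<longrightarrow> cond_alg (clop_alg X T)) \<and>
   \<comment> \<open>... and on morphisms, contravariantly (f \<mapsto> f\<inverse>)\<close>
   (\<forall>(X1::'x topology) T1 (X2::'y topology) T2 f.
      cond_space X1 T1 \<and> cond_space X2 T2 \<and> cond_fun X1 T1 X2 T2 f \<longrightarrow>
      cond_hom (clop_alg X2 T2) (clop_alg X1 T1) (preim X1 f)) \<and>
   \<comment> \<open>it preserves identities\<close>
   (\<forall>(X::'x topology) T. cond_space X T \<longrightarrow>
      (\<forall>U\<in>carrier (clop_alg X T). preim X id U = U)) \<and>
   \<comment> \<open>and reverses composition\<close>
   (\<forall>(X1::'x topology) T1 (X2::'y topology) T2 (X3::'z topology) T3 f g.
      cond_space X1 T1 \<and> cond_space X2 T2 \<and> cond_space X3 T3 \<and>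
      cond_fun X1 T1 X2 T2 f \<and> cond_fun X2 T2 X3 T3 g \<longrightarrow>
      (\<forall>U\<in>carrier (clop_alg X3 T3). preim X1 (g \<circ> f) U = preim X1 f (preim X2 g U))) \<and>
   \<comment> \<open>faithful\<close>
   (\<forall>(X1::'x topology) T1 (X2::'y topology) T2 f g.
      cond_space X1 T1 \<and> cond_space X2 T2 \<and>
      cond_fun X1 T1 X2 T2 f \<and> cond_fun X1 T1 X2 T2 g \<and>
      (\<forall>U\<in>carrier (clop_alg X2 T2). preim X1 f U = preim X1 g U) \<longrightarrow>
      (\<forall>x\<in>topspace X1. f x = g x)) \<and>
   \<comment> \<open>full\<close>
   (\<forall>(X1::'x topology) T1 (X2::'y topology) T2 h.
      cond_space X1 T1 \<and> cond_space X2 T2 \<and>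
      cond_hom (clop_alg X2 T2) (clop_alg X1 T1) h \<longrightarrow>
      (\<exists>f. cond_fun X1 T1 X2 T2 f \<and> (\<forall>U\<in>carrier (clop_alg X2 T2). h U = preim X1 f U))) \<and>
   \<comment> \<open>essentially surjective\<close>
   (\<forall>A::'a calg. cond_alg A \<longrightarrow>
      (\<exists>(X::'a set topology) T. cond_space X T \<and> cond_iso A (clop_alg X T)))"
  apply (intro conjI allI impI)
  subgoal by (erule part1)
  subgoal using part2 by blast
  subgoal by (erule part3)
  subgoal using part4 by blast
  subgoal using part5 by blast
  subgoal using part6 by blast
  subgoal by (erule ess_surj)
  done

end
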